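(* For every c.e. transitive relation $\prec$ on $\omega$ there is a computable strict partial order $\sqsubset$ on $\omega$ such that the spaces of ideals $\mathcal{I}(\prec)$ and $\mathcal{I}(\sqsubset)$ are computably homeomorphic.
   Context: For a transitive relation $\prec$ on a set $S$, an ideal is a set $I\subseteq S$ that is non-empty, a lower set ($b\prec a\in I$ implies $b\in I$), and directed (for all $a,b\in I$ there is $c\in I$ with $a\prec c$ and $b\prec c$). $\mathcal{I}(\prec)$ is the set of all ideals with the topology generated by the basic open sets $[n]_\prec=\{I\in\mathcal{I}(\prec)\mid n\in I\}$, $n\in S$; it is regarded as an effective space with these basic open sets numbered by $n$. An effective space is a pair $(X,\beta)$ with $X$ a countably based $T_0$ space and $\beta:\omega\to P(X)$ a numbering of a base such that $\beta(i)\cap\beta(j)=\bigcup\beta(A_{ij})$ for a uniformly c.e. family of sets $A_{ij}$. A function $f:(X,\beta)\to(Y,\gamma)$ is computable if there is a uniformly c.e. family $(B_n)$ with $f^{-1}(\gamma(n))=\bigcup\beta(B_n)$ for all $n$; a computable homeomorphism is a homeomorphism such that it and its inverse are computable. *)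

theory Defs
  imports "HOL-Analysis.Analysis" "HOL-Library.Nat_Bijection"
begin

datatype recf = Zero | Succ | Proj nat | Cn recf "recf list" | Pr recf recf | Mn recf

inductive eval :: "recf \<Rightarrow> nat list \<Rightarrow> nat \<Rightarrow> bool" where
  eval_Zero: "eval Zero xs 0"
| eval_Succ: "eval Succ (x # xs) (Suc x)"
| eval_Proj: "i < length xs \<Longrightarrow> eval (Proj i) xs (xs ! i)"
| eval_Cn: "length ys = length gs \<Longrightarrow> (\<forall>i<length gs. eval (gs ! i) xs (ys ! i))
            \<Longrightarrow> eval f ys z \<Longrightarrow> eval (Cn f gs) xs z"
| eval_Pr0: "eval f xs y \<Longrightarrow> eval (Pr f g) (0 # xs) y"
| eval_PrS: "eval (Pr f g) (n # xs) y \<Longrightarrow> eval g (n # y # xs) z \<Longrightarrow> eval (Pr f g) (Suc n # xs) z"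
| eval_Mn: "eval f (n # xs) 0 \<Longrightarrow> (\<forall>m<n. \<exists>y. eval f (m # xs) y \<and> y \<noteq> 0)
            \<Longrightarrow> eval (Mn f) xs n"

definition ce_set :: "nat set \<Rightarrow> bool" where
  "ce_set A \<longleftrightarrow> (\<exists>f. \<forall>n. n \<in> A \<longleftrightarrow> (\<exists>y. eval f [n] y))"

definition computable_set :: "nat set \<Rightarrow> bool" where
  "computable_set A \<longleftrightarrow> (\<exists>f. \<forall>n. eval f [n] (if n \<in> A then 1 else 0))"

definition rel_code :: "(nat \<Rightarrow> nat \<Rightarrow> bool) \<Rightarrow> nat set" where
  "rel_code R = {prod_encode (a, b) | a b. R a b}"

definition ce_rel :: "(nat \<Rightarrow> nat \<Rightarrow> bool) \<Rightarrow> bool" where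
  "ce_rel R \<longleftrightarrow> ce_set (rel_code R)"

definition computable_rel :: "(nat \<Rightarrow> nat \<Rightarrow> bool) \<Rightarrow> bool" where
  "computable_rel R \<longleftrightarrow> computable_set (rel_code R)"

definition uniformly_ce :: "(nat \<Rightarrow> nat set) \<Rightarrow> bool" where
  "uniformly_ce B \<longleftrightarrow> ce_set {prod_encode (n, m) | n m. m \<in> B n}"

definition transitive_rel :: "(nat \<Rightarrow> nat \<Rightarrow> bool) \<Rightarrow> bool" where
  "transitive_rel R \<longleftrightarrow> (\<forall>a b c. R a b \<longrightarrow> R b c \<longrightarrow> R a c)"

definition strict_partial_order :: "(nat \<Rightarrow> nat \<Rightarrow> bool) \<Rightarrow> bool" where
  "strict_partial_order R \<longleftrightarrow> (\<forall>a. \<not> R a a) \<and> transitive_rel R"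

definition is_ideal :: "(nat \<Rightarrow> nat \<Rightarrow> bool) \<Rightarrow> nat set \<Rightarrow> bool" where
  "is_ideal R I \<longleftrightarrow> I \<noteq> {} \<and> (\<forall>a b. a \<in> I \<longrightarrow> R b a \<longrightarrow> b \<in> I)
     \<and> (\<forall>a\<in>I. \<forall>b\<in>I. \<exists>c\<in>I. R a c \<and> R b c)"

definition ideals :: "(nat \<Rightarrow> nat \<Rightarrow> bool) \<Rightarrow> nat set set" where
  "ideals R = {I. is_ideal R I}"

definition basic :: "(nat \<Rightarrow> nat \<Rightarrow> bool) \<Rightarrow> nat \<Rightarrow> nat set set" where
  "basic R n = {I \<in> ideals R. n \<in> I}"

definition ideal_topology :: "(nat \<Rightarrow> nat \<Rightarrow> bool) \<Rightarrow> nat set topology" where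
  "ideal_topology R = topology_generated_by (range (basic R))"

definition computable_map ::
  "(nat \<Rightarrow> nat \<Rightarrow> bool) \<Rightarrow> (nat \<Rightarrow> nat \<Rightarrow> bool) \<Rightarrow> (nat set \<Rightarrow> nat set) \<Rightarrow> bool" where
  "computable_map R S f \<longleftrightarrow> (\<exists>B. uniformly_ce B \<and>
     (\<forall>n. {I \<in> ideals R. f I \<in> basic S n} = (\<Union>i\<in>B n. basic R i)))"

definition computably_homeomorphic :: "(nat \<Rightarrow> nat \<Rightarrow> bool) \<Rightarrow> (nat \<Rightarrow> nat \<Rightarrow> bool) \<Rightarrow> bool" where
  "computably_homeomorphic R S \<longleftrightarrow> (\<exists>f g.
     homeomorphic_maps (ideal_topology R) (ideal_topology S) f g \<and>
     computable_map R S f \<and> computable_map S R g)"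

end

theory Submission
  imports Defs
begin


inductive_cases ZeroE: "eval Zero xs y"
inductive_cases SuccE: "eval Succ xs y"
inductive_cases ProjE: "eval (Proj i) xs y"
inductive_cases CnE: "eval (Cn f gs) xs y"
inductive_cases Pr0E: "eval (Pr f g) (0 # xs) y"
inductive_cases PrSE: "eval (Pr f g) (Suc n # xs) y"
inductive_cases MnE: "eval (Mn f) xs y"

lemma eval_det: "eval f xs y \<Longrightarrow> eval f xs z \<Longrightarrow> y = z"
proof (induction arbitrary: z rule: eval.induct)
  case (eval_Zero xs) then show ?case by (blast elim: ZeroE)
next
  case (eval_Succ x xs) then show ?case by (blast elim: SuccE)
next
  case (eval_Proj i xs) then show ?case by (blast elim: ProjE)
next
  case (eval_Cn ys gs xs f z')
  from eval_Cn.prems obtain ys' where l: "length ys' = length gs"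
    and a: "\<forall>i<length gs. eval (gs ! i) xs (ys' ! i)" and e: "eval f ys' z"
    by (erule CnE)
  have "ys = ys'"
  proof (rule nth_equalityI)
    show "length ys = length ys'" using eval_Cn.hyps(1) l by simp
    fix i assume "i < length ys"
    then have "i < length gs" using eval_Cn.hyps(1) by simp
    then show "ys ! i = ys' ! i" using eval_Cn.IH(1) a by blast
  qed
  then show ?case using eval_Cn.IH e by blast
next
  case (eval_Pr0 f xs y g) then show ?case by (blast elim: Pr0E)
next
  case (eval_PrS f g n xs y z') 
  from eval_PrS.prems obtain y' where "eval (Pr f g) (n # xs) y'" "eval g (n # y' # xs) z"
    by (blast elim: PrSE)
  then show ?case using eval_PrS.IH by blast
next
  case (eval_Mn f n xs z)
  from eval_Mn.prems have z0: "eval f (z # xs) 0" and zl: "\<forall>m<z. \<exists>y. eval f (m # xs) y \<and> y \<noteq> 0"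
    by (blast elim: MnE)+
  show ?case
  proof (rule ccontr)
    assume "n \<noteq> z"
    then consider "n < z" | "z < n" by linarith
    then show False
    proof cases
      case 1 then obtain y where y: "eval f (n # xs) y" "y \<noteq> 0" using zl by blast
      have "0 = y" using eval_Mn.IH(1) y(1) by blast
      then show False using y(2) by simp
    next
      case 2 then obtain y where y: "eval f (z # xs) y" "y \<noteq> 0" and 
        "\<forall>x. eval f (z # xs) x \<longrightarrow> y = x" using eval_Mn.IH(2) by blast
      then show False using z0 by blast
    qed
  qed
qed

fun srch :: "(nat \<Rightarrow> nat) \<Rightarrow> nat \<Rightarrow> nat" where
  "srch F 0 = 0"
| "srch F (Suc j) = (if srch F j \<noteq> 0 then srch F j else if F j = 1 then j + 2 else if F j = 0 then 1 else 0)"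

fun bev :: "recf \<Rightarrow> nat \<Rightarrow> nat list \<Rightarrow> nat" where
  "bev Zero s xs = 1"
| "bev Succ s xs = (case xs of [] \<Rightarrow> 0 | x # _ \<Rightarrow> x + 2)"
| "bev (Proj i) s xs = (if i < length xs then xs ! i + 1 else 0)"
| "bev (Cn f gs) s xs = (if (\<forall>g\<in>set gs. bev g s xs \<noteq> 0) then bev f s (map (\<lambda>g. bev g s xs - 1) gs) else 0)"
| "bev (Pr f g) s xs = (case xs of [] \<Rightarrow> 0 | n # ys \<Rightarrow> rec_nat (bev f s ys) (\<lambda>m p. if p = 0 then 0 else bev g s (m # (p - 1) # ys)) n)"
| "bev (Mn f) s xs = srch (\<lambda>j. bev f s (j # xs)) s - 1"

lemma srch_found: "j < n \<Longrightarrow> F j = 1 \<Longrightarrow> \<forall>i<j. F i \<ge> 2 \<Longrightarrow> srch F n = j + 2"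
proof (induction n)
  case 0 then show ?case by simp
next
  case (Suc n)
  show ?case
  proof (cases "j < n")
    case True then show ?thesis using Suc by simp
  next
    case False
    then have jn: "j = n" using Suc by simp
    have "srch F n = 0" if "\<forall>i<n. F i \<ge> 2" for n
      using that by (induction n) auto
    then show ?thesis using Suc jn by simp
  qed
qed

lemma srch_cases: "srch F n = j + 2 \<Longrightarrow> j < n \<and> F j = 1 \<and> (\<forall>i<j. F i \<ge> 2)"
proof (induction n)
  case 0 then show ?case by simp
next
  case (Suc n)
  show ?case
  proof (cases "srch F n \<noteq> 0")
    case True then show ?thesis using Suc by auto
  next
    case False
    have "\<forall>i<n. F i \<ge> 2" if "srch F n = 0" for n
      using that by (induction n) (auto split: if_splits simp: less_Suc_eq)
    then show ?thesis using Suc False by (auto split: if_splits)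
  qed
qed

lemma combine_mono:
  fixes P :: "nat \<Rightarrow> nat \<Rightarrow> bool"
  assumes "\<And>m s s'. P m s \<Longrightarrow> s \<le> s' \<Longrightarrow> P m s'" and "\<forall>m<n. \<exists>s. P m s"
  shows "\<exists>s. \<forall>m<n. P m s"
  using assms(2)
proof (induction n)
  case 0 then show ?case by simp
next
  case (Suc n)
  then obtain s where s: "\<forall>m<n. P m s" by auto
  obtain s2 where s2: "P n s2" using Suc.prems by auto
  have "\<forall>m<Suc n. P m (max s s2)"
    using s s2 assms(1) by (metis less_Suc_eq max.cobounded1 max.cobounded2)
  then show ?case by blast
qed

lemma bev_mono: "bev f s xs = Suc y \<Longrightarrow> s \<le> s' \<Longrightarrow> bev f s' xs = Suc y"
proof (induction f arbitrary: xs y)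
  case Zero then show ?case by simp
next
  case Succ then show ?case by simp
next
  case (Proj i) then show ?case by simp
next
  case (Cn f gs)
  from Cn.prems have all: "\<forall>g\<in>set gs. bev g s xs \<noteq> 0" by (auto split: if_splits)
  have eqs: "\<forall>g\<in>set gs. bev g s' xs = bev g s xs"
  proof
    fix g assume g: "g \<in> set gs"
    then obtain v where "bev g s xs = Suc v" using all not0_implies_Suc by blast
    then show "bev g s' xs = bev g s xs" using Cn.IH(2)[OF g] Cn.prems(2) by simp
  qed
  have "bev f s (map (\<lambda>g. bev g s xs - 1) gs) = Suc y" using Cn.prems all by simp
  then have r: "bev f s' (map (\<lambda>g. bev g s xs - 1) gs) = Suc y" using Cn.IH(1) Cn.prems(2) by blast
  have m: "map (\<lambda>g. bev g s' xs - 1) gs = map (\<lambda>g. bev g s xs - 1) gs"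
    using eqs by simp
  have c: "bev (Cn f gs) s' xs = bev f s' (map (\<lambda>g. bev g s' xs - 1) gs)" using all eqs by simp
  show ?case by (simp only: c m r)
next
  case (Pr f g)
  then obtain n ys where xs: "xs = n # ys" by (auto split: list.splits)
  have H: "rec_nat (bev f s ys) (\<lambda>m p. if p = 0 then 0 else bev g s (m # (p - 1) # ys)) n = Suc y \<Longrightarrow>
        rec_nat (bev f s' ys) (\<lambda>m p. if p = 0 then 0 else bev g s' (m # (p - 1) # ys)) n = Suc y" for y
  proof (induction n arbitrary: y)
    case 0 then show ?case using Pr.IH(1)[of ys y] Pr.prems(2) by simp
  next
    case (Suc n)
    let ?r = "rec_nat (bev f s ys) (\<lambda>m p. if p = 0 then 0 else bev g s (m # (p - 1) # ys)) n"
    from Suc.prems have "?r \<noteq> 0" by (auto split: if_splits)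
    then obtain y' where y': "?r = Suc y'" by (cases ?r) auto
    have "bev g s (n # y' # ys) = Suc y" using Suc.prems y' by simp
    then have "bev g s' (n # y' # ys) = Suc y" using Pr.IH(2) Pr.prems(2) by blast
    then show ?case using Suc.IH[OF y'] by simp
  qed
  have pre: "rec_nat (bev f s ys) (\<lambda>m p. if p = 0 then 0 else bev g s (m # (p - 1) # ys)) n = Suc y"
    using Pr.prems(1) unfolding xs by simp
  show ?case using H[OF pre] unfolding xs by simp
next
  case (Mn f)
  let ?F = "\<lambda>s j. bev f s (j # xs)"
  from Mn.prems have "srch (?F s) s = y + 2" by simp
  from srch_cases[OF this] have a: "y < s" "?F s y = 1" "\<forall>i<y. ?F s i \<ge> 2" by auto
  have b: "?F s' y = 1" using a(2) Mn.IH[of "y # xs" 0] Mn.prems(2) by simp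
  have c: "\<forall>i<y. ?F s' i \<ge> 2"
  proof (intro allI impI)
    fix i assume "i < y"
    then have "?F s i \<ge> 2" using a by auto
    then obtain v where v: "?F s i = Suc v" "v \<ge> 1" by (cases "?F s i") auto
    then show "?F s' i \<ge> 2" using Mn.IH[OF v(1) Mn.prems(2)] v(2) by simp
  qed
  have "srch (?F s') s' = y + 2" using srch_found[of y s' "?F s'"] a(1) b c Mn.prems(2) by simp
  then show ?case by simp
qed

lemma bev_sound: "bev f s xs = Suc y \<Longrightarrow> eval f xs y"
proof (induction f arbitrary: xs y)
  case Zero then show ?case by (simp add: eval_Zero)
next
  case Succ then show ?case by (auto split: list.splits intro: eval_Succ)
next
  case (Proj i) then show ?case by (auto split: if_splits intro: eval_Proj)
next
  case (Cn f gs)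
  from Cn.prems have all: "\<forall>g\<in>set gs. bev g s xs \<noteq> 0" by (auto split: if_splits)
  let ?ys = "map (\<lambda>g. bev g s xs - 1) gs"
  have "bev f s ?ys = Suc y" using Cn.prems all by simp
  then have ef: "eval f ?ys y" using Cn.IH(1) by blast
  have "\<forall>i<length gs. eval (gs ! i) xs (?ys ! i)"
  proof (intro allI impI)
    fix i assume i: "i < length gs"
    then have "gs ! i \<in> set gs" by simp
    then have "bev (gs ! i) s xs = Suc (?ys ! i)" using all i by simp
    then show "eval (gs ! i) xs (?ys ! i)" using Cn.IH(2) \<open>gs ! i \<in> set gs\<close> by blast
  qed
  then show ?case using eval_Cn[of ?ys gs xs f y] ef by simp
next
  case (Pr f g)
  then obtain n ys where xs: "xs = n # ys" by (auto split: list.splits)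
  have H: "rec_nat (bev f s ys) (\<lambda>m p. if p = 0 then 0 else bev g s (m # (p - 1) # ys)) n = Suc y \<Longrightarrow>
        eval (Pr f g) (n # ys) y" for y
  proof (induction n arbitrary: y)
    case 0 then show ?case using Pr.IH(1) by (simp add: eval_Pr0)
  next
    case (Suc n)
    let ?r = "rec_nat (bev f s ys) (\<lambda>m p. if p = 0 then 0 else bev g s (m # (p - 1) # ys)) n"
    from Suc.prems have "?r \<noteq> 0" by (auto split: if_splits)
    then obtain y' where y': "?r = Suc y'" by (cases ?r) auto
    have "bev g s (n # y' # ys) = Suc y" using Suc.prems y' by simp
    then have "eval g (n # y' # ys) y" using Pr.IH(2) by blast
    then show ?case using Suc.IH[OF y'] eval_PrS by blast
  qed
  have pre: "rec_nat (bev f s ys) (\<lambda>m p. if p = 0 then 0 else bev g s (m # (p - 1) # ys)) n = Suc y"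
    using Pr.prems(1) unfolding xs by simp
  show ?case using H[OF pre] unfolding xs by simp
next
  case (Mn f)
  let ?F = "\<lambda>j. bev f s (j # xs)"
  from Mn.prems have "srch ?F s = y + 2" by simp
  from srch_cases[OF this] have a: "?F y = 1" "\<forall>i<y. ?F i \<ge> 2" by auto
  have "eval f (y # xs) 0" using a(1) Mn.IH[of "y # xs" 0] by simp
  moreover have "\<forall>m<y. \<exists>v. eval f (m # xs) v \<and> v \<noteq> 0"
  proof (intro allI impI)
    fix m assume "m < y"
    then have "?F m \<ge> 2" using a by auto
    then obtain v where "?F m = Suc v" "v \<noteq> 0" by (cases "?F m") auto
    then show "\<exists>v. eval f (m # xs) v \<and> v \<noteq> 0" using Mn.IH by blast
  qed
  ultimately show ?case by (rule eval_Mn)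
qed

lemma bev_complete: "eval f xs y \<Longrightarrow> \<exists>s. bev f s xs = Suc y"
proof (induction rule: eval.induct)
  case (eval_Zero xs) then show ?case by simp
next
  case (eval_Succ x xs) then show ?case by simp
next
  case (eval_Proj i xs) then show ?case by simp
next
  case (eval_Cn ys gs xs f z)
  have "\<exists>s. \<forall>i<length gs. bev (gs ! i) s xs = Suc (ys ! i)"
    by (rule combine_mono) (use eval_Cn.IH bev_mono in blast)+
  then obtain s1 where s1: "\<forall>i<length gs. bev (gs ! i) s1 xs = Suc (ys ! i)" by blast
  obtain s2 where s2: "bev f s2 ys = Suc z" using eval_Cn.IH by blast
  let ?s = "max s1 s2"
  have a: "\<forall>i<length gs. bev (gs ! i) ?s xs = Suc (ys ! i)" using s1 bev_mono by (meson max.cobounded1)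
  have all: "\<forall>g\<in>set gs. bev g ?s xs \<noteq> 0" using a by (auto simp: in_set_conv_nth)
  have m: "map (\<lambda>g. bev g ?s xs - 1) gs = ys"
    by (rule nth_equalityI) (use a eval_Cn.hyps(1) in auto)
  have "bev f ?s ys = Suc z" using s2 bev_mono by (meson max.cobounded2)
  then show ?case using all m by (intro exI[of _ ?s]) simp
next
  case (eval_Pr0 f xs y g)
  then obtain s where "bev f s xs = Suc y" by blast
  then show ?case by (intro exI[of _ s]) simp
next
  case (eval_PrS f g n xs y z)
  obtain s1 where s1: "bev (Pr f g) s1 (n # xs) = Suc y" using eval_PrS.IH by blast
  obtain s2 where s2: "bev g s2 (n # y # xs) = Suc z" using eval_PrS.IH by blast
  let ?s = "max s1 s2"
  have a: "bev (Pr f g) ?s (n # xs) = Suc y" using s1 bev_mono by (meson max.cobounded1)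
  have b: "bev g ?s (n # y # xs) = Suc z" using s2 bev_mono by (meson max.cobounded2)
  show ?case using a b by (intro exI[of _ ?s]) simp
next
  case (eval_Mn f n xs)
  let ?P = "\<lambda>m s. m \<le> n \<and> (\<exists>v. bev f s (m # xs) = Suc v \<and> (m < n \<longrightarrow> v \<noteq> 0) \<and> (m = n \<longrightarrow> v = 0))"
  have "\<exists>s. \<forall>m<Suc n. ?P m s"
  proof (rule combine_mono)
    show "?P m s'" if "?P m s" "s \<le> s'" for m s s'
    proof -
      from that(1) obtain v where v: "m \<le> n" "bev f s (m # xs) = Suc v" "m < n \<longrightarrow> v \<noteq> 0" "m = n \<longrightarrow> v = 0"
        by blast
      have "bev f s' (m # xs) = Suc v" using bev_mono[OF v(2) that(2)] .
      then show ?thesis using v by blast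
    qed
    show "\<forall>m<Suc n. \<exists>s. ?P m s"
    proof (intro allI impI)
      fix m assume "m < Suc n"
      then consider "m < n" | "m = n" by linarith
      then show "\<exists>s. ?P m s"
      proof cases

        case 1 then obtain v s where "bev f s (m # xs) = Suc v" "v \<noteq> 0" using eval_Mn.IH by blast
        then show ?thesis using 1 by auto
      next
        case 2
        obtain s where "bev f s (n # xs) = Suc 0" using eval_Mn.IH(1) by blast
        then show ?thesis using 2 by blast
      qed
    qed
  qed
  then obtain s where s: "\<forall>m<Suc n. ?P m s" by blast
  let ?F = "\<lambda>j. bev f (s + Suc n) (j # xs)"
  have "?P n s" using s by blast
  then obtain v where "bev f s (n # xs) = Suc v" "v = 0" by blast
  then have "?F n = 1" using bev_mono[of f s "n # xs" v "s + Suc n"] by simp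
  moreover have "\<forall>i<n. ?F i \<ge> 2"
  proof (intro allI impI)
    fix i assume "i < n"
    then have "i < Suc n" by simp
    then have "?P i s" using s by blast
    then obtain v where "bev f s (i # xs) = Suc v" "v \<noteq> 0" using \<open>i < n\<close> by blast
    then show "?F i \<ge> 2" using bev_mono[of f s "i # xs" v "s + Suc n"] by simp
  qed
  ultimately have "srch ?F (s + Suc n) = n + 2" by (intro srch_found) auto
  then show ?case by (intro exI[of _ "s + Suc n"]) simp
qed


definition rf :: "nat \<Rightarrow> recf \<Rightarrow> (nat list \<Rightarrow> nat) \<Rightarrow> bool" where
  "rf k g F \<longleftrightarrow> (\<forall>xs. length xs = k \<longrightarrow> eval g xs (F xs))"

definition pcomp :: "nat \<Rightarrow> (nat list \<Rightarrow> nat) \<Rightarrow> bool" where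
  "pcomp k F \<longleftrightarrow> (\<exists>g. rf k g F)"

definition dec :: "nat \<Rightarrow> (nat list \<Rightarrow> bool) \<Rightarrow> bool" where
  "dec k P \<longleftrightarrow> pcomp k (\<lambda>xs. if P xs then 1 else 0)"

lemma pc_cong: "pcomp k F \<Longrightarrow> (\<And>xs. length xs = k \<Longrightarrow> F xs = G xs) \<Longrightarrow> pcomp k G"
  unfolding pcomp_def rf_def by metis

lemma dec_cong: "dec k P \<Longrightarrow> (\<And>xs. length xs = k \<Longrightarrow> P xs = Q xs) \<Longrightarrow> dec k Q"
  unfolding dec_def by (erule pc_cong) simp

lemma pc_zero: "pcomp k (\<lambda>_. 0)"
  unfolding pcomp_def rf_def by (auto intro: eval_Zero)

lemma pc_proj: "i < k \<Longrightarrow> pcomp k (\<lambda>xs. xs ! i)"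
  unfolding pcomp_def rf_def by (auto intro: eval_Proj)

lemma list_choice: "\<forall>x\<in>set L. \<exists>g. P x g \<Longrightarrow> \<exists>gs. length gs = length L \<and> (\<forall>i<length L. P (L ! i) (gs ! i))"
proof (induction L)
  case Nil then show ?case by simp
next
  case (Cons a L)
  then obtain gs where gs: "length gs = length L" "\<forall>i<length L. P (L ! i) (gs ! i)" by auto
  obtain g where "P a g" using Cons by auto
  then show ?case using gs by (intro exI[of _ "g # gs"]) (auto simp: nth_Cons split: nat.splits)
qed

lemma pc_compose:
  assumes "pcomp m F" "length Gs = m" "\<forall>G\<in>set Gs. pcomp k G"
  shows "pcomp k (\<lambda>xs. F (map (\<lambda>G. G xs) Gs))"
proof -
  obtain f where f: "rf m f F" using assms(1) pcomp_def by blast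
  obtain gs where gs: "length gs = length Gs" "\<forall>i<length Gs. rf k (gs ! i) (Gs ! i)"
    using list_choice[of Gs "\<lambda>G g. rf k g G"] assms(3) unfolding pcomp_def by blast
  have "rf k (Cn f gs) (\<lambda>xs. F (map (\<lambda>G. G xs) Gs))"
    unfolding rf_def
  proof (intro allI impI)
    fix xs :: "nat list" assume l: "length xs = k"
    show "eval (Cn f gs) xs (F (map (\<lambda>G. G xs) Gs))"
    proof (rule eval_Cn)
      show "length (map (\<lambda>G. G xs) Gs) = length gs" using gs by simp
      show "\<forall>i<length gs. eval (gs ! i) xs (map (\<lambda>G. G xs) Gs ! i)"
        using gs l unfolding rf_def by auto
      show "eval f (map (\<lambda>G. G xs) Gs) (F (map (\<lambda>G. G xs) Gs))"
        using f assms(2) unfolding rf_def by simp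
    qed
  qed
  then show ?thesis unfolding pcomp_def by blast
qed

lemma pc_prim:
  assumes "pcomp k F0" "pcomp (Suc (Suc k)) G"
  shows "pcomp (Suc k) (\<lambda>xs. rec_nat (F0 (tl xs)) (\<lambda>m p. G (m # p # tl xs)) (hd xs))"
proof -
  obtain f where f: "rf k f F0" using assms(1) pcomp_def by blast
  obtain g where g: "rf (Suc (Suc k)) g G" using assms(2) pcomp_def by blast
  have "eval (Pr f g) (n # ys) (rec_nat (F0 ys) (\<lambda>m p. G (m # p # ys)) n)" if "length ys = k" for n ys
  proof (induction n)
    case 0 then show ?case using f that unfolding rf_def by (simp add: eval_Pr0)
  next
    case (Suc n)
    then show ?case using g that unfolding rf_def by (auto intro: eval_PrS)
  qed
  then have "rf (Suc k) (Pr f g) (\<lambda>xs. rec_nat (F0 (tl xs)) (\<lambda>m p. G (m # p # tl xs)) (hd xs))"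
    unfolding rf_def by (metis Suc_length_conv list.sel(1,3))
  then show ?thesis unfolding pcomp_def by blast
qed

lemma map_nth_upt_drop: "length xs = K \<Longrightarrow> map (nth xs) [a..<K] = drop a xs"
  by (rule nth_equalityI) auto

lemma pc_projs:
  assumes "pcomp m F" "length L = m" "\<forall>i\<in>set L. i < k"
  shows "pcomp k (\<lambda>xs. F (map (nth xs) L))"
proof -
  have "pcomp k (\<lambda>xs. F (map (\<lambda>G. G xs) (map (\<lambda>i xs. xs ! i) L)))"
    using assms by (intro pc_compose) (auto intro: pc_proj)
  then show ?thesis by (simp add: comp_def)
qed

lemma pc_rec:
  assumes "pcomp k F0" "pcomp (Suc (Suc k)) G" "pcomp k N"
  shows "pcomp k (\<lambda>xs. rec_nat (F0 xs) (\<lambda>m p. G (m # p # xs)) (N xs))"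
proof -
  have a: "pcomp (Suc k) (\<lambda>xs. rec_nat (F0 (tl xs)) (\<lambda>m p. G (m # p # tl xs)) (hd xs))"
    by (rule pc_prim[OF assms(1,2)])
  have "pcomp k (\<lambda>xs. (\<lambda>xs. rec_nat (F0 (tl xs)) (\<lambda>m p. G (m # p # tl xs)) (hd xs))
          (map (\<lambda>H. H xs) (N # map (\<lambda>i xs. xs ! i) [0..<k])))"
    using assms(3) by (intro pc_compose[OF a]) (auto intro: pc_proj)
  then show ?thesis
    by (rule pc_cong) (simp add: comp_def map_nth_upt_drop)
qed


lemma pc_cong': "pcomp k F \<Longrightarrow> k = k' \<Longrightarrow> (\<And>xs. length xs = k' \<Longrightarrow> F xs = G xs) \<Longrightarrow> pcomp k' G"
  using pc_cong by blast

lemma pc_compose1: "pcomp 1 H \<Longrightarrow> pcomp k F \<Longrightarrow> pcomp k (\<lambda>xs. H [F xs])"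
  using pc_compose[of 1 H "[F]" k] by simp

lemma pc_compose2: "pcomp 2 H \<Longrightarrow> pcomp k F \<Longrightarrow> pcomp k G \<Longrightarrow> pcomp k (\<lambda>xs. H [F xs, G xs])"
  using pc_compose[of 2 H "[F, G]" k] by simp

lemma pc_succ: "pcomp k F \<Longrightarrow> pcomp k (\<lambda>xs. Suc (F xs))"
proof -
  have "rf 1 Succ (\<lambda>ys. Suc (hd ys))"
    unfolding rf_def by (auto simp: length_Suc_conv intro: eval_Succ)
  then have "pcomp 1 (\<lambda>ys. Suc (hd ys))" unfolding pcomp_def by blast
  then show "pcomp k F \<Longrightarrow> pcomp k (\<lambda>xs. Suc (F xs))" using pc_compose1 by fastforce
qed

lemma pc_const: "pcomp k (\<lambda>_. c)"
  by (induction c) (auto intro: pc_zero pc_succ)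

lemma rec_add: "rec_nat a (\<lambda>m p. Suc p) n = n + a"
  by (induction n) auto

lemma pc_add2: "pcomp 2 (\<lambda>ys. ys ! 0 + ys ! 1)"
proof -
  have "pcomp (Suc 1) (\<lambda>xs. rec_nat ((\<lambda>zs. zs ! 0) (tl xs)) (\<lambda>m p. (\<lambda>zs. Suc (zs ! 1)) (m # p # tl xs)) (hd xs))"
    by (rule pc_prim) (auto intro: pc_proj pc_succ)
  then show ?thesis
    by (rule pc_cong') (auto simp: rec_add length_Suc_conv numeral_2_eq_2)
qed

lemma pc_add: "pcomp k F \<Longrightarrow> pcomp k G \<Longrightarrow> pcomp k (\<lambda>xs. F xs + G xs)"
  using pc_compose2[OF pc_add2] by simp

lemma rec_pred: "rec_nat 0 (\<lambda>m p. m) n = n - 1"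
  by (induction n) auto

lemma pc_pred1: "pcomp 1 (\<lambda>ys. hd ys - 1)"
proof -
  have "pcomp (Suc 0) (\<lambda>xs. rec_nat ((\<lambda>zs. 0) (tl xs)) (\<lambda>m p. (\<lambda>zs. zs ! 0) (m # p # tl xs)) (hd xs))"
    by (rule pc_prim) (auto intro: pc_proj pc_zero)
  then show ?thesis
    by (rule pc_cong') (auto simp: rec_pred length_Suc_conv)
qed

lemma pc_pred: "pcomp k F \<Longrightarrow> pcomp k (\<lambda>xs. F xs - 1)"
  using pc_compose1[OF pc_pred1] by simp

lemma pc_pred0: "pcomp k F \<Longrightarrow> pcomp k (\<lambda>xs. F xs - Suc 0)"
  using pc_pred by simp

lemma rec_sub: "rec_nat (a::nat) (\<lambda>m p. p - Suc 0) n = a - n"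
  by (induction n) auto

lemma pc_sub2: "pcomp 2 (\<lambda>ys. ys ! 0 - ys ! 1)"
proof -
  have "pcomp 2 (\<lambda>xs. rec_nat ((\<lambda>zs. zs ! 0) xs) (\<lambda>m p. (\<lambda>zs. zs ! 1 - 1) (m # p # xs)) ((\<lambda>zs. zs ! 1) xs))"
    by (rule pc_rec; (intro pc_pred pc_proj)?; simp)
  then show ?thesis
    by (rule pc_cong) (auto simp: rec_sub)
qed

lemma pc_sub: "pcomp k F \<Longrightarrow> pcomp k G \<Longrightarrow> pcomp k (\<lambda>xs. F xs - G xs)"
  using pc_compose2[OF pc_sub2] by simp

lemma rec_mult: "rec_nat 0 (\<lambda>m p. p + a) n = n * a"
  by (induction n) auto

lemma pc_mult2: "pcomp 2 (\<lambda>ys. ys ! 0 * ys ! 1)"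
proof -
  have "pcomp 2 (\<lambda>xs. rec_nat ((\<lambda>zs. 0) xs) (\<lambda>m p. (\<lambda>zs. zs ! 1 + zs ! 2) (m # p # xs)) ((\<lambda>zs. zs ! 1) xs))"
    by (rule pc_rec; (intro pc_add pc_proj pc_zero)?; simp)
  then show ?thesis
    by (rule pc_cong) (auto simp: rec_mult)
qed

lemma pc_mult: "pcomp k F \<Longrightarrow> pcomp k G \<Longrightarrow> pcomp k (\<lambda>xs. F xs * G xs)"
  using pc_compose2[OF pc_mult2] by simp

lemma dec_le: "pcomp k F \<Longrightarrow> pcomp k G \<Longrightarrow> dec k (\<lambda>xs. F xs \<le> G xs)"
  unfolding dec_def
  by (rule pc_cong[where F="\<lambda>xs. 1 - (F xs - G xs)"]) (auto intro!: pc_sub pc_const)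

lemma dec_eq: "pcomp k F \<Longrightarrow> pcomp k G \<Longrightarrow> dec k (\<lambda>xs. F xs = G xs)"
  unfolding dec_def
  by (rule pc_cong[where F="\<lambda>xs. (1 - (F xs - G xs)) * (1 - (G xs - F xs))"]) (auto intro!: pc_sub pc_const pc_mult)

lemma dec_not: "dec k P \<Longrightarrow> dec k (\<lambda>xs. \<not> P xs)"
  unfolding dec_def
  by (rule pc_cong[where F="\<lambda>xs. 1 - (if P xs then 1 else 0)"]) (auto intro!: pc_sub pc_const)

lemma dec_and: "dec k P \<Longrightarrow> dec k Q \<Longrightarrow> dec k (\<lambda>xs. P xs \<and> Q xs)"
  unfolding dec_def
  by (rule pc_cong[where F="\<lambda>xs. (if P xs then 1 else 0) * (if Q xs then 1 else 0)"]) (auto intro!: pc_mult)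

lemma dec_or: "dec k P \<Longrightarrow> dec k Q \<Longrightarrow> dec k (\<lambda>xs. P xs \<or> Q xs)"
  using dec_not[OF dec_and[OF dec_not dec_not]] by simp

lemma dec_imp: "dec k P \<Longrightarrow> dec k Q \<Longrightarrow> dec k (\<lambda>xs. P xs \<longrightarrow> Q xs)"
  using dec_or[OF dec_not] by simp

lemma dec_const: "dec k (\<lambda>_. b)"
  unfolding dec_def by (cases b) (auto intro: pc_const)

lemma pc_if: "dec k P \<Longrightarrow> pcomp k F \<Longrightarrow> pcomp k G \<Longrightarrow> pcomp k (\<lambda>xs. if P xs then F xs else G xs)"
  unfolding dec_def
  by (rule pc_cong[where F="\<lambda>xs. (if P xs then 1 else 0) * F xs + (1 - (if P xs then 1 else 0)) * G xs"])
     (auto intro!: pc_mult pc_add pc_sub pc_const)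

lemma rec_bex: "rec_nat (0::nat) (\<lambda>m p. if 0 < p \<or> P (m # xs) then 1 else 0) n = (if \<exists>i<n. P (i # xs) then 1 else 0)"
  by (induction n) (auto simp: less_Suc_eq)

lemma dec_shift: "dec (Suc k) P \<Longrightarrow> dec (Suc (Suc k)) (\<lambda>zs. P (zs ! 0 # drop 2 zs))"
proof -
  assume a: "dec (Suc k) P"
  have "pcomp (Suc (Suc k)) (\<lambda>zs. (\<lambda>ys. if P ys then 1 else 0) (map (nth zs) (0 # [2..<Suc (Suc k)])))"
    using pc_projs[OF a[unfolded dec_def], of "0 # [2..<Suc (Suc k)]" "Suc (Suc k)"] by (simp del: upt_Suc)
  then show ?thesis unfolding dec_def
    by (rule pc_cong) (simp add: map_nth_upt_drop del: upt_Suc)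
qed

lemma dec_bex: "dec (Suc k) P \<Longrightarrow> pcomp k N \<Longrightarrow> dec k (\<lambda>xs. \<exists>i<N xs. P (i # xs))"
proof -
  assume a: "dec (Suc k) P" and n: "pcomp k N"
  have "dec (Suc (Suc k)) (\<lambda>zs. zs ! 1 \<noteq> 0 \<or> P (zs ! 0 # drop 2 zs))"
    by (intro dec_or dec_not dec_eq dec_shift a pc_proj pc_const) auto
  then have "pcomp k (\<lambda>xs. rec_nat ((\<lambda>_. 0) xs) (\<lambda>m p. (\<lambda>zs. if zs ! 1 \<noteq> 0 \<or> P (zs ! 0 # drop 2 zs) then 1 else 0) (m # p # xs)) (N xs))"
    unfolding dec_def by (intro pc_rec pc_zero n)
  then show ?thesis unfolding dec_def
    by (rule pc_cong) (simp add: rec_bex)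
qed

lemma dec_ball: "dec (Suc k) P \<Longrightarrow> pcomp k N \<Longrightarrow> dec k (\<lambda>xs. \<forall>i<N xs. P (i # xs))"
  using dec_not[OF dec_bex[OF dec_not]] by simp


lemma dec_all_nz: "\<forall>G\<in>set Gs. pcomp k G \<Longrightarrow> dec k (\<lambda>xs. \<forall>G\<in>set Gs. G xs \<noteq> 0)"
proof (induction Gs)
  case Nil then show ?case using dec_const[of k True] by simp
next
  case (Cons G Gs)
  have "dec k (\<lambda>xs. G xs \<noteq> 0 \<and> (\<forall>G\<in>set Gs. G xs \<noteq> 0))"
    using Cons by (intro dec_and dec_not dec_eq pc_const) auto
  then show ?case by simp
qed

lemma srch_rec: "srch F n = rec_nat 0 (\<lambda>j p. if p \<noteq> 0 then p else if F j = 1 then j + 2 else if F j = 0 then 1 else 0) n"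
  by (induction n) auto

lemma pc_hd: "pcomp (Suc k) hd"
  using pc_proj[of 0 "Suc k"] by (rule pc_cong) (auto simp: length_Suc_conv)

lemma bev_pcomp: "pcomp (Suc k) (\<lambda>xs. bev f (hd xs) (tl xs))"
proof (induction f arbitrary: k)
  case Zero
  show ?case using pc_const[of "Suc k" 1] by (rule pc_cong) simp
next
  case Succ
  show ?case
  proof (cases k)
    case 0
    show ?thesis using pc_zero[of "Suc k"] by (rule pc_cong) (auto simp: 0 length_Suc_conv)
  next
    case (Suc k')
    have "pcomp (Suc k) (\<lambda>xs. Suc (Suc (xs ! 1)))" using Suc by (intro pc_succ pc_proj) simp
    then show ?thesis by (rule pc_cong) (auto simp: Suc length_Suc_conv)
  qed
next
  case (Proj i)
  show ?case
  proof (cases "i < k")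
    case True
    have "pcomp (Suc k) (\<lambda>xs. Suc (xs ! Suc i))" using True by (intro pc_succ pc_proj) simp
    then show ?thesis by (rule pc_cong) (auto simp: True nth_tl)
  next
    case False
    show ?thesis using pc_zero[of "Suc k"] by (rule pc_cong) (auto simp: False)
  qed
next
  case (Cn f gs)
  let ?Gs = "(\<lambda>xs. hd xs) # map (\<lambda>g xs. bev g (hd xs) (tl xs) - 1) gs"
  have a: "pcomp (Suc k) (\<lambda>xs. (\<lambda>ys. bev f (hd ys) (tl ys)) (map (\<lambda>G. G xs) ?Gs))"
  proof (rule pc_compose[OF Cn.IH(1)])
    show "length ?Gs = Suc (length gs)" by simp
    show "\<forall>G\<in>set ?Gs. pcomp (Suc k) G"
    proof
      fix G assume "G \<in> set ?Gs"
      then consider "G = hd" | g where "g \<in> set gs" "G = (\<lambda>xs. bev g (hd xs) (tl xs) - 1)" by auto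
      then show "pcomp (Suc k) G"
      proof cases
        case 1 then show ?thesis using pc_hd by simp
      next
        case 2 then show ?thesis using pc_pred[OF Cn.IH(2)[OF 2(1)]] by simp
      qed
    qed
  qed
  have b: "dec (Suc k) (\<lambda>xs. \<forall>G\<in>set (map (\<lambda>g xs. bev g (hd xs) (tl xs)) gs). G xs \<noteq> 0)"
    using Cn.IH(2) by (intro dec_all_nz) auto
  have "pcomp (Suc k) (\<lambda>xs. if (\<forall>G\<in>set (map (\<lambda>g xs. bev g (hd xs) (tl xs)) gs). G xs \<noteq> 0)
     then (\<lambda>ys. bev f (hd ys) (tl ys)) (map (\<lambda>G. G xs) ?Gs) else 0)"
    by (rule pc_if[OF b a pc_zero])
  then show ?case by (rule pc_cong) (auto simp: comp_def)
next
  case (Pr f g)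
  show ?case
  proof (cases k)
    case 0
    show ?thesis using pc_zero[of "Suc k"] by (rule pc_cong) (auto simp: 0 length_Suc_conv)
  next
    case (Suc k')
    let ?K = "Suc (Suc k')"
    have F0: "pcomp ?K (\<lambda>xs. (\<lambda>ys. bev f (hd ys) (tl ys)) (map (nth xs) (0 # [2..<?K])))"
      by (rule pc_projs[OF Pr.IH(1)]) auto
    let ?L = "[2, 0] @ [4..<Suc (Suc ?K)]"
    have G1: "pcomp (Suc (Suc ?K)) (\<lambda>zs. (\<lambda>ys. bev g (hd ys) (tl ys))
               (map (\<lambda>G. G zs) ((\<lambda>z. z ! 2) # (\<lambda>z. z ! 0) # (\<lambda>z. z ! 1 - 1) # map (\<lambda>i z. z ! i) [4..<Suc (Suc ?K)])))"
      by (rule pc_compose[OF Pr.IH(2)]) (auto intro!: pc_proj pc_pred0)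
    have G: "pcomp (Suc (Suc ?K)) (\<lambda>zs. if zs ! 1 = 0 then 0 else (\<lambda>ys. bev g (hd ys) (tl ys))
               (map (\<lambda>G. G zs) ((\<lambda>z. z ! 2) # (\<lambda>z. z ! 0) # (\<lambda>z. z ! 1 - 1) # map (\<lambda>i z. z ! i) [4..<Suc (Suc ?K)])))"
      by (rule pc_if[OF _ pc_zero G1]) (intro dec_eq pc_proj pc_const; simp)
    have N: "pcomp ?K (\<lambda>xs. xs ! 1)" by (rule pc_proj) simp
    have "pcomp ?K (\<lambda>xs. rec_nat ((\<lambda>xs. (\<lambda>ys. bev f (hd ys) (tl ys)) (map (nth xs) (0 # [2..<?K]))) xs)
       (\<lambda>m p. (\<lambda>zs. if zs ! 1 = 0 then 0 else (\<lambda>ys. bev g (hd ys) (tl ys))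
               (map (\<lambda>G. G zs) ((\<lambda>z. z ! 2) # (\<lambda>z. z ! 0) # (\<lambda>z. z ! 1 - 1) # map (\<lambda>i z. z ! i) [4..<Suc (Suc ?K)]))) (m # p # xs)) ((\<lambda>xs. xs ! 1) xs))"
      by (rule pc_rec[OF F0 G N])
    then show ?thesis
    proof (rule pc_cong')
      show "?K = Suc k" using Suc by simp
      fix xs :: "nat list" assume l: "length xs = Suc k"
      then obtain s n ys where xs: "xs = s # n # ys" and ly: "length ys = k'" using Suc
        by (auto simp: length_Suc_conv)
      have d1: "map (nth xs) [2..<?K] = ys" using xs ly by (simp add: map_nth_upt_drop del: upt_Suc)
      have d2: "map (nth (m # p # xs)) [4..<Suc (Suc ?K)] = ys" for m p
        using xs ly by (simp add: map_nth_upt_drop del: upt_Suc)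
      show "rec_nat ((\<lambda>xs. (\<lambda>ys. bev f (hd ys) (tl ys)) (map (nth xs) (0 # [2..<?K]))) xs)
       (\<lambda>m p. (\<lambda>zs. if zs ! 1 = 0 then 0 else (\<lambda>ys. bev g (hd ys) (tl ys))
               (map (\<lambda>G. G zs) ((\<lambda>z. z ! 2) # (\<lambda>z. z ! 0) # (\<lambda>z. z ! 1 - 1) # map (\<lambda>i z. z ! i) [4..<Suc (Suc ?K)]))) (m # p # xs)) ((\<lambda>xs. xs ! 1) xs)
        = bev (Pr f g) (hd xs) (tl xs)"
        using d1 d2 by (simp add: xs comp_def del: upt_Suc cong: if_cong)
    qed
  qed
next
  case (Mn f)
  let ?K = "Suc k"
  let ?H = "\<lambda>zs. (\<lambda>ys. bev f (hd ys) (tl ys)) (map (nth zs) ([2, 0] @ [3..<Suc (Suc ?K)]))"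
  have H: "pcomp (Suc (Suc ?K)) ?H"
    by (rule pc_projs[OF Mn.IH]) auto
  have G: "pcomp (Suc (Suc ?K)) (\<lambda>zs. if zs ! 1 \<noteq> 0 then zs ! 1 else if ?H zs = 1 then zs ! 0 + 2 else if ?H zs = 0 then 1 else 0)"
    by (intro pc_if dec_not dec_eq pc_proj pc_const H pc_add; simp)
  have "pcomp ?K (\<lambda>xs. rec_nat ((\<lambda>_. 0) xs) (\<lambda>m p. (\<lambda>zs. if zs ! 1 \<noteq> 0 then zs ! 1 else if ?H zs = 1 then zs ! 0 + 2 else if ?H zs = 0 then 1 else 0) (m # p # xs)) ((\<lambda>xs. xs ! 0) xs))"
    by (rule pc_rec[OF pc_zero G]) (rule pc_proj; simp)
  then have "pcomp ?K (\<lambda>xs. rec_nat ((\<lambda>_. 0) xs) (\<lambda>m p. (\<lambda>zs. if zs ! 1 \<noteq> 0 then zs ! 1 else if ?H zs = 1 then zs ! 0 + 2 else if ?H zs = 0 then 1 else 0) (m # p # xs)) ((\<lambda>xs. xs ! 0) xs) - 1)"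
    by (rule pc_pred)
  then show ?case
  proof (rule pc_cong)
    fix xs :: "nat list" assume l: "length xs = Suc k"
    then obtain s ys where xs: "xs = s # ys" and ly: "length ys = k"
      by (auto simp: length_Suc_conv)
    have d: "map (nth (m # p # xs)) [3..<Suc (Suc ?K)] = ys" for m p
      using xs ly by (simp add: map_nth_upt_drop del: upt_Suc)
    show "rec_nat ((\<lambda>_. 0) xs) (\<lambda>m p. (\<lambda>zs. if zs ! 1 \<noteq> 0 then zs ! 1 else if ?H zs = 1 then zs ! 0 + 2 else if ?H zs = 0 then 1 else 0) (m # p # xs)) ((\<lambda>xs. xs ! 0) xs) - 1
        = bev (Mn f) (hd xs) (tl xs)"
      using d by (simp add: xs srch_rec del: upt_Suc cong: if_cong)
  qed
qed


lemma pc_tl: "pcomp k F \<Longrightarrow> pcomp (Suc k) (\<lambda>zs. F (tl zs))"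
proof -
  assume a: "pcomp k F"
  have "pcomp (Suc k) (\<lambda>zs. F (map (nth zs) [1..<Suc k]))"
    by (rule pc_projs[OF a]) auto
  then show ?thesis
    by (rule pc_cong) (simp add: map_nth_upt_drop drop_Suc del: upt_Suc)
qed

lemma dec_tl: "dec k P \<Longrightarrow> dec (Suc k) (\<lambda>zs. P (tl zs))"
  unfolding dec_def by (drule pc_tl) simp

lemma pc_compose_list:
  "pcomp m F \<Longrightarrow> length Gs = m \<Longrightarrow> (\<forall>G\<in>set Gs. pcomp k G) \<Longrightarrow> pcomp k (\<lambda>xs. F (map (\<lambda>G. G xs) Gs))"
  by (rule pc_compose)

lemma dec_compose:
  "dec m P \<Longrightarrow> length Gs = m \<Longrightarrow> (\<forall>G\<in>set Gs. pcomp k G) \<Longrightarrow> dec k (\<lambda>xs. P (map (\<lambda>G. G xs) Gs))"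
  unfolding dec_def by (drule pc_compose) auto

lemma dec_compose1: "dec 1 P \<Longrightarrow> pcomp k F \<Longrightarrow> dec k (\<lambda>xs. P [F xs])"
  using dec_compose[of 1 P "[F]" k] by simp

lemma dec_compose2: "dec 2 P \<Longrightarrow> pcomp k F \<Longrightarrow> pcomp k G \<Longrightarrow> dec k (\<lambda>xs. P [F xs, G xs])"
  using dec_compose[of 2 P "[F, G]" k] by simp

lemma dec_compose3: "dec 3 P \<Longrightarrow> pcomp k F \<Longrightarrow> pcomp k G \<Longrightarrow> pcomp k H \<Longrightarrow> dec k (\<lambda>xs. P [F xs, G xs, H xs])"
  using dec_compose[of 3 P "[F, G, H]" k] by (simp add: numeral_3_eq_3)

lemma dec_ball2: "dec (Suc k) (\<lambda>zs. Q (hd zs) (tl zs)) \<Longrightarrow> pcomp k N \<Longrightarrow> dec k (\<lambda>xs. \<forall>i<N xs. Q i xs)"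
  using dec_ball[of k "\<lambda>zs. Q (hd zs) (tl zs)" N] by simp

lemma dec_bex2: "dec (Suc k) (\<lambda>zs. Q (hd zs) (tl zs)) \<Longrightarrow> pcomp k N \<Longrightarrow> dec k (\<lambda>xs. \<exists>i<N xs. Q i xs)"
  using dec_bex[of k "\<lambda>zs. Q (hd zs) (tl zs)" N] by simp

lemma pc_tl_nth: "i < k \<Longrightarrow> pcomp (Suc k) (\<lambda>zs. tl zs ! i)"
  by (rule pc_tl[OF pc_proj])

lemma pc_tl2_nth: "i < k \<Longrightarrow> pcomp (Suc (Suc k)) (\<lambda>zs. tl (tl zs) ! i)"
  by (rule pc_tl[OF pc_tl[OF pc_proj]])

section \<open>Pairing\<close>

lemma rec_tri: "rec_nat (0::nat) (\<lambda>m p. Suc (p + m)) n = triangle n"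
  by (induction n) auto

lemma pc_tri1: "pcomp 1 (\<lambda>ys. triangle (hd ys))"
proof -
  have "pcomp (Suc 0) (\<lambda>xs. rec_nat ((\<lambda>zs. 0) (tl xs)) (\<lambda>m p. (\<lambda>zs. zs ! 1 + Suc (zs ! 0)) (m # p # tl xs)) (hd xs))"
    by (rule pc_prim) (auto intro!: pc_proj pc_zero pc_add pc_succ)
  then show ?thesis
    by (rule pc_cong') (auto simp: rec_tri)
qed

lemma pc_tri: "pcomp k F \<Longrightarrow> pcomp k (\<lambda>xs. triangle (F xs))"
  using pc_compose1[OF pc_tri1] by simp

lemma pc_penc: "pcomp k F \<Longrightarrow> pcomp k G \<Longrightarrow> pcomp k (\<lambda>xs. prod_encode (F xs, G xs))"
  unfolding prod_encode_def by (simp add: pc_add pc_tri)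

definition KK :: "nat \<Rightarrow> nat" where
  "KK c = rec_nat 0 (\<lambda>c' k. if triangle (Suc k) \<le> Suc c' then Suc k else k) c"

lemma KK_prop: "triangle (KK c) \<le> c \<and> c - triangle (KK c) \<le> KK c"
proof (induction c)
  case 0 then show ?case by (simp add: KK_def)
next
  case (Suc c)
  have e: "KK (Suc c) = (if triangle (Suc (KK c)) \<le> Suc c then Suc (KK c) else KK c)"
    by (simp add: KK_def)
  show ?case
  proof (cases "triangle (Suc (KK c)) \<le> Suc c")
    case True
    then show ?thesis using Suc e by auto
  next
    case False
    then show ?thesis using Suc e by auto
  qed
qed

lemma prod_decode_KK: "prod_decode c = (c - triangle (KK c), KK c - (c - triangle (KK c)))"
proof -
  have "c = triangle (KK c) + (c - triangle (KK c))" using KK_prop[of c] by simp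
  then have "prod_decode c = prod_decode_aux (KK c) (c - triangle (KK c))"
    by (metis prod_decode_triangle_add)
  also have "\<dots> = (c - triangle (KK c), KK c - (c - triangle (KK c)))"
    using KK_prop[of c] by (simp add: prod_decode_aux.simps)
  finally show ?thesis .
qed

lemma pc_KK1: "pcomp 1 (\<lambda>ys. KK (hd ys))"
proof -
  have G: "pcomp (Suc (Suc 0)) (\<lambda>zs. if triangle (Suc (zs ! 1)) \<le> Suc (zs ! 0) then Suc (zs ! 1) else zs ! 1)"
    by (intro pc_if dec_le pc_tri pc_succ pc_proj; simp)
  have "pcomp (Suc 0) (\<lambda>xs. rec_nat ((\<lambda>zs. 0) (tl xs)) (\<lambda>m p. (\<lambda>zs. if triangle (Suc (zs ! 1)) \<le> Suc (zs ! 0) then Suc (zs ! 1) else zs ! 1) (m # p # tl xs)) (hd xs))"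
    by (rule pc_prim[OF pc_zero G])
  then show ?thesis
    by (rule pc_cong') (auto simp: KK_def simp del: triangle_Suc cong: if_cong)
qed

lemma pc_KK: "pcomp k F \<Longrightarrow> pcomp k (\<lambda>xs. KK (F xs))"
  using pc_compose1[OF pc_KK1] by simp

lemma pc_fstd: "pcomp k F \<Longrightarrow> pcomp k (\<lambda>xs. fst (prod_decode (F xs)))"
  unfolding prod_decode_KK by (simp add: pc_sub pc_tri pc_KK)

lemma pc_sndd: "pcomp k F \<Longrightarrow> pcomp k (\<lambda>xs. snd (prod_decode (F xs)))"
  unfolding prod_decode_KK by (simp add: pc_sub pc_tri pc_KK)

section \<open>Finite sets\<close>

lemma rec_par: "rec_nat (0::nat) (\<lambda>m. (-) (Suc 0)) n = n mod 2"
  by (induction n) (auto simp: mod_Suc)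

lemma rec_half: "rec_nat 0 (\<lambda>m q. q + m mod 2) n = n div (2::nat)"
  by (induction n) (auto simp: div_Suc mod_Suc split: if_splits)

lemma pc_par1: "pcomp 1 (\<lambda>ys. hd ys mod 2)"
proof -
  have "pcomp (Suc 0) (\<lambda>xs. rec_nat ((\<lambda>zs. 0) (tl xs)) (\<lambda>m p. (\<lambda>zs. 1 - zs ! 1) (m # p # tl xs)) (hd xs))"
    by (rule pc_prim) (auto intro!: pc_proj pc_zero pc_sub pc_const)
  then show ?thesis
    by (rule pc_cong') (auto simp: rec_par)
qed

lemma pc_mod2: "pcomp k F \<Longrightarrow> pcomp k (\<lambda>xs. F xs mod 2)"
  using pc_compose1[OF pc_par1] by simp

lemma pc_half1: "pcomp 1 (\<lambda>ys. hd ys div 2)"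
proof -
  have "pcomp (Suc 0) (\<lambda>xs. rec_nat ((\<lambda>zs. 0) (tl xs)) (\<lambda>m p. (\<lambda>zs. zs ! 1 + zs ! 0 mod 2) (m # p # tl xs)) (hd xs))"
    by (rule pc_prim) (auto intro!: pc_proj pc_zero pc_add pc_mod2)
  then show ?thesis
    by (rule pc_cong') (auto simp: rec_half)
qed

lemma pc_div2: "pcomp k F \<Longrightarrow> pcomp k (\<lambda>xs. F xs div 2)"
  using pc_compose1[OF pc_half1] by simp

lemma rec_divpow: "rec_nat n (\<lambda>m p. p div 2) a = n div (2::nat) ^ a"
proof (induction a)
  case 0 then show ?case by simp
next
  case (Suc a)
  have "n div 2 ^ a div 2 = n div (2 ^ a * 2)" by (simp add: div_mult2_eq)
  also have "\<dots> = n div 2 ^ Suc a" by (simp add: mult.commute)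
  finally show ?case using Suc by simp
qed

lemma pc_divpow: "pcomp k N \<Longrightarrow> pcomp k A \<Longrightarrow> pcomp k (\<lambda>xs. N xs div 2 ^ A xs)"
proof -
  assume n: "pcomp k N" and a: "pcomp k A"
  have "pcomp k (\<lambda>xs. rec_nat (N xs) (\<lambda>m p. (\<lambda>zs. zs ! 1 div 2) (m # p # xs)) (A xs))"
    by (rule pc_rec[OF n _ a]) (auto intro!: pc_div2 pc_proj)
  then show ?thesis by (rule pc_cong) (simp add: rec_divpow)
qed

lemma dec_mem: "pcomp k A \<Longrightarrow> pcomp k N \<Longrightarrow> dec k (\<lambda>xs. A xs \<in> set_decode (N xs))"
proof -
  assume a: "pcomp k A" and n: "pcomp k N"
  have "dec k (\<lambda>xs. (N xs div 2 ^ A xs) mod 2 = 1)"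
    by (intro dec_eq pc_mod2 pc_divpow a n pc_const)
  then show ?thesis by (rule dec_cong) (auto simp: set_decode_def odd_iff_mod_2_eq_one)
qed

lemma set_decode_less: "a \<in> set_decode n \<Longrightarrow> a < n"
proof (rule ccontr)
  assume "a \<in> set_decode n" "\<not> a < n"
  then have "n < 2 ^ a" using less_exp[of a] by linarith
  then have "n div 2 ^ a = 0" by simp
  then show False using \<open>a \<in> set_decode n\<close> by (simp add: set_decode_def)
qed

lemma set_decode_empty_iff: "set_decode n = {} \<longleftrightarrow> n = 0"
  by (metis set_decode_inverse set_decode_zero set_encode_empty)

section \<open>c.e. and computable sets\<close>

lemma ce_from_dec:
  assumes "dec 2 P"
  shows "ce_set {n. \<exists>y. P [y, n]}"
proof -
  have "pcomp 2 (\<lambda>xs. if P xs then 0 else 1)"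
    using dec_not[OF assms] unfolding dec_def by (rule pc_cong) auto
  then obtain g where g: "rf 2 g (\<lambda>xs. if P xs then 0 else 1)" unfolding pcomp_def by blast
  have "n \<in> {n. \<exists>y. P [y, n]} \<longleftrightarrow> (\<exists>y. eval (Mn g) [n] y)" for n
  proof
    assume "n \<in> {n. \<exists>y. P [y, n]}"
    then have ex: "\<exists>y. P [y, n]" by simp
    let ?y = "LEAST y. P [y, n]"
    have py: "P [?y, n]" using LeastI_ex[OF ex] .
    have "eval g [?y, n] 0" using g py unfolding rf_def by (metis (mono_tags, lifting) length_Cons list.size(3) numeral_2_eq_2)
    moreover have "\<forall>m<?y. \<exists>v. eval g [m, n] v \<and> v \<noteq> 0"
    proof (intro allI impI)
      fix m assume "m < ?y"
      then have "\<not> P [m, n]" using not_less_Least by blast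
      then have "eval g [m, n] 1" using g unfolding rf_def by (metis (mono_tags, lifting) length_Cons list.size(3) numeral_2_eq_2)
      then show "\<exists>v. eval g [m, n] v \<and> v \<noteq> 0" by blast
    qed
    ultimately have "eval (Mn g) [n] ?y" using eval_Mn[of g ?y "[n]"] by simp
    then show "\<exists>y. eval (Mn g) [n] y" by blast
  next
    assume "\<exists>y. eval (Mn g) [n] y"
    then obtain y where "eval (Mn g) [n] y" by blast
    then have e0: "eval g [y, n] 0" by (blast elim: MnE)
    have "eval g [y, n] (if P [y, n] then 0 else 1)" using g unfolding rf_def by (metis (mono_tags, lifting) length_Cons list.size(3) numeral_2_eq_2)
    then have "P [y, n]" using eval_det[OF e0] by (auto split: if_splits)
    then show "n \<in> {n. \<exists>y. P [y, n]}" by blast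
  qed
  then show ?thesis unfolding ce_set_def by blast
qed

lemma computable_from_dec:
  assumes "dec 1 P"
  shows "computable_set {n. P [n]}"
proof -
  obtain g where g: "rf 1 g (\<lambda>xs. if P xs then 1 else 0)" using assms unfolding dec_def pcomp_def by blast
  have "eval g [n] (if n \<in> {n. P [n]} then 1 else 0)" for n
    using g unfolding rf_def by simp
  then show ?thesis unfolding computable_set_def by blast
qed


definition Ef :: "recf \<Rightarrow> nat \<Rightarrow> nat \<Rightarrow> nat \<Rightarrow> bool" where
  "Ef f t a b \<longleftrightarrow> bev f t [prod_encode (a, b)] \<noteq> 0"

definition Fs :: "nat \<Rightarrow> nat set" where "Fs x = set_decode (fst (prod_decode x))"
definition st :: "nat \<Rightarrow> nat" where "st x = snd (prod_decode x)"

definition Srel :: "recf \<Rightarrow> nat \<Rightarrow> nat \<Rightarrow> bool" where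
  "Srel f x y \<longleftrightarrow> st x < st y \<and> Fs x \<noteq> {} \<and> Fs x \<subseteq> Fs y \<and> (\<exists>b\<in>Fs y. \<forall>a\<in>Fs x. Ef f (st y) a b)
     \<and> (\<forall>a\<in>Fs x. \<forall>z\<le>st x. Ef f (st x) z a \<longrightarrow> z \<in> Fs y)"

definition Phi :: "nat set \<Rightarrow> nat set" where "Phi I = {x. Fs x \<noteq> {} \<and> Fs x \<subseteq> I}"
definition Psi :: "nat set \<Rightarrow> nat set" where "Psi J = (\<Union>x\<in>J. Fs x)"

definition mk :: "nat set \<Rightarrow> nat \<Rightarrow> nat" where "mk H u = prod_encode (set_encode H, u)"

lemma Fs_mk: "finite H \<Longrightarrow> Fs (mk H u) = H"
  by (simp add: Fs_def mk_def)

lemma st_mk: "st (mk H u) = u"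
  by (simp add: st_def mk_def)

lemma finite_Fs: "finite (Fs x)"
  by (simp add: Fs_def)

lemma Ef_mono: "Ef f t a b \<Longrightarrow> t \<le> u \<Longrightarrow> Ef f u a b"
  unfolding Ef_def using bev_mono by (metis not0_implies_Suc)

definition good :: "(nat \<Rightarrow> nat \<Rightarrow> bool) \<Rightarrow> recf \<Rightarrow> bool" where
  "good R f \<longleftrightarrow> (\<forall>a b. R a b \<longleftrightarrow> (\<exists>t. Ef f t a b)) \<and> transitive_rel R"

lemma good_sound: "good R f \<Longrightarrow> Ef f t a b \<Longrightarrow> R a b"
  unfolding good_def by blast

lemma good_complete: "good R f \<Longrightarrow> R a b \<Longrightarrow> \<exists>t. Ef f t a b"
  unfolding good_def by blast

lemma good_trans: "good R f \<Longrightarrow> R a b \<Longrightarrow> R b c \<Longrightarrow> R a c"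
  unfolding good_def transitive_rel_def by blast

lemma fin_upper_R:
  assumes g: "good R f" and I: "is_ideal R I"
  shows "finite F \<Longrightarrow> F \<noteq> {} \<Longrightarrow> F \<subseteq> I \<Longrightarrow> \<exists>c\<in>I. \<forall>a\<in>F. R a c"
proof (induction F rule: finite_ne_induct)
  case (singleton a)
  then show ?case using I unfolding is_ideal_def by blast
next
  case (insert a F)
  then obtain c1 where c1: "c1 \<in> I" "\<forall>b\<in>F. R b c1" by auto
  have "a \<in> I" using insert by auto
  then obtain c where c: "c \<in> I" "R a c" "R c1 c" using I c1(1) unfolding is_ideal_def by blast
  have "\<forall>b\<in>F. R b c" using c1(2) c(3) good_trans[OF g] by blast
  then show ?case using c by blast
qed

lemma fin_stage:
  assumes g: "good R f"
  shows "finite F \<Longrightarrow> \<forall>a\<in>F. R a c \<Longrightarrow> \<exists>t. \<forall>a\<in>F. Ef f t a c"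
proof (induction F rule: finite_induct)
  case empty then show ?case by simp
next
  case (insert a F)
  then obtain t1 where t1: "\<forall>b\<in>F. Ef f t1 b c" by auto
  obtain t2 where t2: "Ef f t2 a c" using insert good_complete[OF g] by blast
  have "\<forall>b\<in>insert a F. Ef f (max t1 t2) b c"
    using t1 t2 Ef_mono by (metis insert_iff max.cobounded1 max.cobounded2)
  then show ?case by blast
qed

lemma Srel_spo: "strict_partial_order (Srel f)"
  unfolding strict_partial_order_def transitive_rel_def
proof (intro conjI allI impI)
  fix a show "\<not> Srel f a a" unfolding Srel_def by simp
next
  fix x y z assume xy: "Srel f x y" and yz: "Srel f y z"
  show "Srel f x z" unfolding Srel_def
  proof (intro conjI)
    show "st x < st z" using xy yz unfolding Srel_def by simp
    show "Fs x \<noteq> {}" using xy unfolding Srel_def by simp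
    show "Fs x \<subseteq> Fs z" using xy yz unfolding Srel_def by blast
    show "\<exists>b\<in>Fs z. \<forall>a\<in>Fs x. Ef f (st z) a b" using xy yz unfolding Srel_def by blast
    show "\<forall>a\<in>Fs x. \<forall>w\<le>st x. Ef f (st x) w a \<longrightarrow> w \<in> Fs z" using xy yz unfolding Srel_def by blast
  qed
qed

lemma Srel_trans: "Srel f x y \<Longrightarrow> Srel f y z \<Longrightarrow> Srel f x z"
  using Srel_spo unfolding strict_partial_order_def transitive_rel_def by blast

lemma Phi_ideal:
  assumes g: "good R f" and I: "is_ideal R I"
  shows "is_ideal (Srel f) (Phi I)"
  unfolding is_ideal_def
proof (intro conjI allI impI ballI)
  obtain a where a: "a \<in> I" using I unfolding is_ideal_def by blast
  have "mk {a} 0 \<in> Phi I" using a by (simp add: Phi_def Fs_mk)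
  then show "Phi I \<noteq> {}" by blast
next
  fix x y assume "x \<in> Phi I" "Srel f y x"
  then show "y \<in> Phi I" unfolding Phi_def Srel_def by blast
next
  fix x y assume x: "x \<in> Phi I" and y: "y \<in> Phi I"
  let ?F = "Fs x \<union> Fs y"
  let ?m = "max (st x) (st y)"
  have F: "finite ?F" "?F \<noteq> {}" "?F \<subseteq> I" using x y by (auto simp: Phi_def finite_Fs)
  obtain c where c: "c \<in> I" "\<forall>a\<in>?F. R a c" using fin_upper_R[OF g I F(1,2,3)] by blast
  obtain t0 where t0: "\<forall>a\<in>?F. Ef f t0 a c" using fin_stage[OF g F(1) c(2)] by blast
  let ?u = "Suc (max t0 ?m)"
  let ?P = "{z. z \<le> ?m \<and> (\<exists>a\<in>?F. Ef f ?m z a)}"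
  let ?H = "?F \<union> {c} \<union> ?P"
  have finH: "finite ?H" using F(1) by (auto intro: finite_subset[of _ "{..?m}"])
  have HI: "?H \<subseteq> I"
  proof -
    have "?P \<subseteq> I"
    proof
      fix z assume "z \<in> ?P"
      then obtain a where "a \<in> ?F" "Ef f ?m z a" by blast
      then show "z \<in> I" using good_sound[OF g] F(3) I unfolding is_ideal_def by blast
    qed
    then show ?thesis using F(3) c(1) by blast
  qed
  let ?w = "mk ?H ?u"
  have w: "?w \<in> Phi I" using finH HI by (simp add: Phi_def Fs_mk)
  have sub: "Srel f v ?w" if v: "v \<in> Phi I" "Fs v \<subseteq> ?F" "st v \<le> ?m" for v
    unfolding Srel_def Fs_mk[OF finH] st_mk
  proof (intro conjI)
    show "st v < ?u" using v by simp
    show "Fs v \<noteq> {}" using v unfolding Phi_def by blast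
    show "Fs v \<subseteq> ?H" using v by blast
    have "\<forall>a\<in>Fs v. Ef f ?u a c" using t0 v(2) Ef_mono by (metis (no_types, lifting) le_SucI max.cobounded1 subsetD)
    then show "\<exists>b\<in>?H. \<forall>a\<in>Fs v. Ef f ?u a b" by blast
    show "\<forall>a\<in>Fs v. \<forall>z\<le>st v. Ef f (st v) z a \<longrightarrow> z \<in> ?H"
    proof (intro ballI allI impI)
      fix a z assume "a \<in> Fs v" "z \<le> st v" "Ef f (st v) z a"
      then have "z \<le> ?m" "Ef f ?m z a" "a \<in> ?F" using v Ef_mono by auto
      then show "z \<in> ?H" by blast
    qed
  qed
  have "Srel f x ?w" using sub[of x] x by simp
  moreover have "Srel f y ?w" using sub[of y] y by simp
  ultimately show "\<exists>w\<in>Phi I. Srel f x w \<and> Srel f y w" using w by blast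
qed

lemma J_ne: "is_ideal (Srel f) J \<Longrightarrow> x \<in> J \<Longrightarrow> Fs x \<noteq> {}"
  unfolding is_ideal_def Srel_def by blast

lemma J_up: "is_ideal (Srel f) J \<Longrightarrow> x \<in> J \<Longrightarrow> \<exists>y\<in>J. Srel f x y \<and> n \<le> st y"
proof (induction n)
  case 0 then show ?case unfolding is_ideal_def by blast
next
  case (Suc n)
  then obtain y where y: "y \<in> J" "Srel f x y" "n \<le> st y" by blast
  then obtain y' where y': "y' \<in> J" "Srel f y y'" using Suc.prems unfolding is_ideal_def by blast
  have "Srel f x y'" using Srel_trans y(2) y'(2) by blast
  moreover have "Suc n \<le> st y'" using y(3) y'(2) unfolding Srel_def by simp
  ultimately show ?case using y' by blast
qed

lemma Psi_ideal:
  assumes g: "good R f" and J: "is_ideal (Srel f) J"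
  shows "is_ideal R (Psi J)"
  unfolding is_ideal_def
proof (intro conjI allI impI ballI)
  obtain x where x: "x \<in> J" using J unfolding is_ideal_def by blast
  then show "Psi J \<noteq> {}" using J_ne[OF J x] unfolding Psi_def by blast
next
  fix a b assume a: "a \<in> Psi J" and ba: "R b a"
  then obtain x where x: "x \<in> J" "a \<in> Fs x" unfolding Psi_def by blast
  obtain t0 where t0: "Ef f t0 b a" using good_complete[OF g ba] by blast
  obtain y where y: "y \<in> J" "Srel f x y" "max t0 b \<le> st y" using J_up[OF J x(1)] by blast
  have ay: "a \<in> Fs y" using y(2) x(2) unfolding Srel_def by blast
  obtain z where z: "z \<in> J" "Srel f y z" using J y(1) unfolding is_ideal_def by blast
  have "Ef f (st y) b a" using t0 y(3) Ef_mono by simp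
  then have "b \<in> Fs z" using z(2) ay y(3) unfolding Srel_def by simp
  then show "b \<in> Psi J" using z(1) unfolding Psi_def by blast
next
  fix a b assume a: "a \<in> Psi J" and b: "b \<in> Psi J"
  then obtain x y where x: "x \<in> J" "a \<in> Fs x" and y: "y \<in> J" "b \<in> Fs y" unfolding Psi_def by blast
  obtain z where z: "z \<in> J" "Srel f x z" "Srel f y z" using J x(1) y(1) unfolding is_ideal_def by blast
  have ab: "a \<in> Fs z" "b \<in> Fs z" using x(2) y(2) z unfolding Srel_def by blast+
  obtain w where w: "w \<in> J" "Srel f z w" using J z(1) unfolding is_ideal_def by blast
  obtain c where c: "c \<in> Fs w" "\<forall>a\<in>Fs z. Ef f (st w) a c" using w(2) unfolding Srel_def by blast
  have "R a c" "R b c" using c(2) ab good_sound[OF g] by blast+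
  moreover have "c \<in> Psi J" using c(1) w(1) unfolding Psi_def by blast
  ultimately show "\<exists>c\<in>Psi J. R a c \<and> R b c" by blast
qed

lemma Psi_Phi:
  assumes I: "is_ideal R I"
  shows "Psi (Phi I) = I"
proof
  show "Psi (Phi I) \<subseteq> I" unfolding Psi_def Phi_def by blast
  show "I \<subseteq> Psi (Phi I)"
  proof
    fix a assume "a \<in> I"
    then have "mk {a} 0 \<in> Phi I" "a \<in> Fs (mk {a} 0)" by (auto simp: Phi_def Fs_mk)
    then show "a \<in> Psi (Phi I)" unfolding Psi_def by blast
  qed
qed

lemma J_fin_upper:
  assumes J: "is_ideal (Srel f) J"
  shows "finite A \<Longrightarrow> A \<subseteq> Psi J \<Longrightarrow> \<exists>h\<in>J. A \<subseteq> Fs h"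
proof (induction A rule: finite_induct)
  case empty then show ?case using J unfolding is_ideal_def by blast
next
  case (insert a A)
  then obtain h1 where h1: "h1 \<in> J" "A \<subseteq> Fs h1" by auto
  obtain y where y: "y \<in> J" "a \<in> Fs y" using insert.prems unfolding Psi_def by blast
  obtain z where z: "z \<in> J" "Srel f h1 z" "Srel f y z" using J h1(1) y(1) unfolding is_ideal_def by blast
  have "insert a A \<subseteq> Fs z" using h1(2) y(2) z(2,3) unfolding Srel_def by blast
  then show ?case using z(1) by blast
qed

lemma Phi_Psi:
  assumes J: "is_ideal (Srel f) J"
  shows "Phi (Psi J) = J"
proof
  show "J \<subseteq> Phi (Psi J)" unfolding Phi_def Psi_def using J_ne[OF J] by blast
  show "Phi (Psi J) \<subseteq> J"
  proof
    fix x assume "x \<in> Phi (Psi J)"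
    then have x: "Fs x \<noteq> {}" "Fs x \<subseteq> Psi J" unfolding Phi_def by auto
    obtain h where h: "h \<in> J" "Fs x \<subseteq> Fs h" using J_fin_upper[OF J finite_Fs x(2)] by blast
    obtain h' where h': "h' \<in> J" "Srel f h h'" "st x \<le> st h'" using J_up[OF J h(1)] by blast
    obtain w where w: "w \<in> J" "Srel f h' w" using J h'(1) unfolding is_ideal_def by blast
    have xh': "Fs x \<subseteq> Fs h'" using h(2) h'(2) unfolding Srel_def by blast
    have "Srel f x w" unfolding Srel_def
    proof (intro conjI)
      show "st x < st w" using h'(3) w(2) unfolding Srel_def by simp
      show "Fs x \<noteq> {}" by (rule x(1))
      show "Fs x \<subseteq> Fs w" using xh' w(2) unfolding Srel_def by blast
      show "\<exists>b\<in>Fs w. \<forall>a\<in>Fs x. Ef f (st w) a b" using xh' w(2) unfolding Srel_def by blast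
      show "\<forall>a\<in>Fs x. \<forall>z\<le>st x. Ef f (st x) z a \<longrightarrow> z \<in> Fs w"
      proof (intro ballI allI impI)
        fix a z assume "a \<in> Fs x" "z \<le> st x" "Ef f (st x) z a"
        then have "a \<in> Fs h'" "z \<le> st h'" "Ef f (st h') z a" using xh' h'(3) Ef_mono by auto
        then show "z \<in> Fs w" using w(2) unfolding Srel_def by blast
      qed
    qed
    then show "x \<in> J" using J w(1) unfolding is_ideal_def by blast
  qed
qed

lemma Phi_pre:
  assumes g: "good R f" and I: "is_ideal R I"
  shows "n \<in> Phi I \<longleftrightarrow> (\<exists>i\<in>I. Fs n \<noteq> {} \<and> (\<forall>a\<in>Fs n. R a i))"
proof
  assume "n \<in> Phi I"
  then have "Fs n \<noteq> {}" "Fs n \<subseteq> I" unfolding Phi_def by auto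
  then show "\<exists>i\<in>I. Fs n \<noteq> {} \<and> (\<forall>a\<in>Fs n. R a i)" using fin_upper_R[OF g I finite_Fs] by blast
next
  assume "\<exists>i\<in>I. Fs n \<noteq> {} \<and> (\<forall>a\<in>Fs n. R a i)"
  then show "n \<in> Phi I" using I unfolding Phi_def is_ideal_def by blast
qed


lemma dec_Ef: "pcomp k T \<Longrightarrow> pcomp k A \<Longrightarrow> pcomp k B \<Longrightarrow> dec k (\<lambda>xs. Ef f (T xs) (A xs) (B xs))"
proof -
  assume t: "pcomp k T" and a: "pcomp k A" and b: "pcomp k B"
  have h: "pcomp 2 (\<lambda>xs. bev f (hd xs) (tl xs))"
    using bev_pcomp[of 1 f] by (rule pc_cong') auto
  have "pcomp k (\<lambda>xs. (\<lambda>xs. bev f (hd xs) (tl xs)) [T xs, prod_encode (A xs, B xs)])"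
    by (rule pc_compose2[OF h t pc_penc[OF a b]])
  then have "pcomp k (\<lambda>xs. bev f (T xs) [prod_encode (A xs, B xs)])" by simp
  then have "dec k (\<lambda>xs. \<not> bev f (T xs) [prod_encode (A xs, B xs)] = 0)"
    by (intro dec_not dec_eq pc_const)
  then show ?thesis unfolding Ef_def .
qed

lemma dec_less: "pcomp k F \<Longrightarrow> pcomp k G \<Longrightarrow> dec k (\<lambda>xs. F xs < G xs)"
  using dec_le[OF pc_succ] by (simp add: Suc_le_eq)

definition Scode :: "recf \<Rightarrow> nat \<Rightarrow> nat \<Rightarrow> nat \<Rightarrow> nat \<Rightarrow> bool" where
  "Scode f cx sx cy sy \<longleftrightarrow> sx < sy \<and> cx \<noteq> 0 \<and> (\<forall>a<cx. a \<in> set_decode cx \<longrightarrow> a \<in> set_decode cy)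
    \<and> (\<exists>b<cy. b \<in> set_decode cy \<and> (\<forall>a<cx. a \<in> set_decode cx \<longrightarrow> Ef f sy a b))
    \<and> (\<forall>a<cx. a \<in> set_decode cx \<longrightarrow> (\<forall>z<Suc sx. Ef f sx z a \<longrightarrow> z \<in> set_decode cy))"

lemma ball_sd: "(\<forall>a<c. a \<in> set_decode c \<longrightarrow> P a) \<longleftrightarrow> (\<forall>a\<in>set_decode c. P a)"
  using set_decode_less by blast

lemma bex_sd: "(\<exists>b<c. b \<in> set_decode c \<and> P b) \<longleftrightarrow> (\<exists>b\<in>set_decode c. P b)"
  using set_decode_less by blast

lemma Srel_code: "Srel f x y \<longleftrightarrow> Scode f (fst (prod_decode x)) (snd (prod_decode x)) (fst (prod_decode y)) (snd (prod_decode y))"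
  unfolding Srel_def Scode_def Fs_def st_def
  by (simp only: ball_sd bex_sd less_Suc_eq_le set_decode_empty_iff subset_eq)

lemma dec_c3: assumes "pcomp k CX" "pcomp k CY"
  shows "dec k (\<lambda>xs. \<forall>a<CX xs. a \<in> set_decode (CX xs) \<longrightarrow> a \<in> set_decode (CY xs))"
  by (intro dec_ball2 dec_imp dec_mem pc_hd pc_tl assms)

lemma dec_c4: assumes "pcomp k CX" "pcomp k CY" "pcomp k SY"
  shows "dec k (\<lambda>xs. \<exists>b<CY xs. b \<in> set_decode (CY xs) \<and> (\<forall>a<CX xs. a \<in> set_decode (CX xs) \<longrightarrow> Ef f (SY xs) a b))"
  by (intro dec_bex2 dec_and dec_mem dec_ball2 dec_imp dec_Ef pc_hd pc_tl assms)

lemma dec_c5: assumes "pcomp k CX" "pcomp k SX" "pcomp k CY"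
  shows "dec k (\<lambda>xs. \<forall>a<CX xs. a \<in> set_decode (CX xs) \<longrightarrow> (\<forall>z<Suc (SX xs). Ef f (SX xs) z a \<longrightarrow> z \<in> set_decode (CY xs)))"
  by (intro dec_ball2 dec_imp dec_mem dec_Ef pc_hd pc_tl pc_succ assms)

lemma dec_Scode: assumes "pcomp k CX" "pcomp k SX" "pcomp k CY" "pcomp k SY"
  shows "dec k (\<lambda>xs. Scode f (CX xs) (SX xs) (CY xs) (SY xs))"
  unfolding Scode_def
  by (intro dec_and dec_less dec_not dec_eq pc_const dec_c3 dec_c4 dec_c5 assms)

lemma Srel_computable: "computable_rel (Srel f)"
proof -
  let ?x = "\<lambda>xs. fst (prod_decode (xs ! 0))" and ?y = "\<lambda>xs. snd (prod_decode (xs ! 0))"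
  have p0: "pcomp 1 (\<lambda>xs. xs ! 0)" by (rule pc_proj) simp
  have "dec 1 (\<lambda>xs. Scode f (fst (prod_decode (?x xs))) (snd (prod_decode (?x xs))) (fst (prod_decode (?y xs))) (snd (prod_decode (?y xs))))"
    by (intro dec_Scode pc_fstd pc_sndd p0)
  then have "computable_set {n. Scode f (fst (prod_decode (fst (prod_decode n)))) (snd (prod_decode (fst (prod_decode n)))) (fst (prod_decode (snd (prod_decode n)))) (snd (prod_decode (snd (prod_decode n))))}"
    using computable_from_dec by fastforce
  moreover have "rel_code (Srel f) = {n. Scode f (fst (prod_decode (fst (prod_decode n)))) (snd (prod_decode (fst (prod_decode n)))) (fst (prod_decode (snd (prod_decode n)))) (snd (prod_decode (snd (prod_decode n))))}"
  proof (rule set_eqI)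
    fix n
    obtain a b where n: "n = prod_encode (a, b)" by (metis prod_decode_inverse surj_pair)
    show "n \<in> rel_code (Srel f) \<longleftrightarrow> n \<in> {n. Scode f (fst (prod_decode (fst (prod_decode n)))) (snd (prod_decode (fst (prod_decode n)))) (fst (prod_decode (snd (prod_decode n)))) (snd (prod_decode (snd (prod_decode n))))}"
      unfolding rel_code_def n using Srel_code[of f a b] by auto
  qed
  ultimately show ?thesis unfolding computable_rel_def by simp
qed


definition B1 :: "(nat \<Rightarrow> nat \<Rightarrow> bool) \<Rightarrow> nat \<Rightarrow> nat set" where
  "B1 R n = {i. Fs n \<noteq> {} \<and> (\<forall>a\<in>Fs n. R a i)}"

definition B2 :: "nat \<Rightarrow> nat set" where
  "B2 a = {x. a \<in> Fs x}"

lemma dec_Q: assumes "pcomp k T" "pcomp k CN" "pcomp k I"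
  shows "dec k (\<lambda>xs. CN xs \<noteq> 0 \<and> (\<forall>a<CN xs. a \<in> set_decode (CN xs) \<longrightarrow> Ef f (T xs) a (I xs)))"
  by (intro dec_and dec_not dec_eq pc_const dec_ball2 dec_imp dec_mem dec_Ef pc_hd pc_tl assms)

lemma B1_ce:
  assumes g: "good R f"
  shows "uniformly_ce (B1 R)"
proof -
  let ?Q = "\<lambda>t n i. fst (prod_decode n) \<noteq> 0 \<and> (\<forall>a<fst (prod_decode n). a \<in> set_decode (fst (prod_decode n)) \<longrightarrow> Ef f t a i)"
  have p0: "pcomp 2 (\<lambda>xs. xs ! 0)" and p1: "pcomp 2 (\<lambda>xs. xs ! 1)" by (rule pc_proj; simp)+
  have "dec 2 (\<lambda>xs. ?Q (xs ! 0) (fst (prod_decode (xs ! 1))) (snd (prod_decode (xs ! 1))))"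
    by (intro dec_Q pc_fstd pc_sndd p0 p1)
  then have ce: "ce_set {c. \<exists>t. ?Q t (fst (prod_decode c)) (snd (prod_decode c))}"
    using ce_from_dec by fastforce
  have eq: "i \<in> B1 R n \<longleftrightarrow> (\<exists>t. ?Q t n i)" for n i
  proof
    assume "i \<in> B1 R n"
    then have a: "Fs n \<noteq> {}" "\<forall>a\<in>Fs n. R a i" unfolding B1_def by auto
    obtain t where "\<forall>a\<in>Fs n. Ef f t a i" using fin_stage[OF g finite_Fs a(2)] by blast
    then have "?Q t n i" using a(1) unfolding Fs_def by (simp add: ball_sd set_decode_empty_iff)
    then show "\<exists>t. ?Q t n i" by blast
  next
    assume "\<exists>t. ?Q t n i"
    then obtain t where "?Q t n i" by blast
    then have "Fs n \<noteq> {}" "\<forall>a\<in>Fs n. Ef f t a i" unfolding Fs_def by (simp_all add: ball_sd set_decode_empty_iff)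
    then show "i \<in> B1 R n" unfolding B1_def using good_sound[OF g] by blast
  qed
  have "{prod_encode (n, m) |n m. m \<in> B1 R n} = {c. \<exists>t. ?Q t (fst (prod_decode c)) (snd (prod_decode c))}"
  proof (rule set_eqI)
    fix c
    obtain n m where c: "c = prod_encode (n, m)" by (metis prod_decode_inverse surj_pair)
    show "c \<in> {prod_encode (n, m) |n m. m \<in> B1 R n} \<longleftrightarrow> c \<in> {c. \<exists>t. ?Q t (fst (prod_decode c)) (snd (prod_decode c))}"
      unfolding c using eq[of m n] by auto
  qed
  then show ?thesis unfolding uniformly_ce_def using ce by simp
qed

lemma B2_ce: "uniformly_ce B2"
proof -
  have p1: "pcomp 2 (\<lambda>xs. xs ! 1)" by (rule pc_proj; simp)
  have "dec 2 (\<lambda>xs. fst (prod_decode (xs ! 1)) \<in> set_decode (fst (prod_decode (snd (prod_decode (xs ! 1))))))"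
    by (intro dec_mem pc_fstd pc_sndd p1)
  then have ce: "ce_set {c. \<exists>y::nat. fst (prod_decode c) \<in> set_decode (fst (prod_decode (snd (prod_decode c))))}"
    using ce_from_dec by fastforce
  have "{prod_encode (n, m) |n m. m \<in> B2 n} = {c. \<exists>y::nat. fst (prod_decode c) \<in> set_decode (fst (prod_decode (snd (prod_decode c))))}"
  proof (rule set_eqI)
    fix c
    obtain n m where c: "c = prod_encode (n, m)" by (metis prod_decode_inverse surj_pair)
    show "c \<in> {prod_encode (n, m) |n m. m \<in> B2 n} \<longleftrightarrow> c \<in> {c. \<exists>y::nat. fst (prod_decode c) \<in> set_decode (fst (prod_decode (snd (prod_decode c))))}"
      unfolding c B2_def Fs_def by auto
  qed
  then show ?thesis unfolding uniformly_ce_def using ce by simp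
qed

lemma topspace_it: "topspace (ideal_topology R) = ideals R"
  unfolding ideal_topology_def topology_generated_by_topspace
proof
  show "\<Union> (range (basic R)) \<subseteq> ideals R" unfolding basic_def by auto
  show "ideals R \<subseteq> \<Union> (range (basic R))"
  proof
    fix I assume I: "I \<in> ideals R"
    then obtain a where "a \<in> I" unfolding ideals_def is_ideal_def by auto
    then have "I \<in> basic R a" using I unfolding basic_def by simp
    then show "I \<in> \<Union> (range (basic R))" by blast
  qed
qed

lemma cont_from_eq:
  assumes m: "\<forall>I\<in>ideals R. F I \<in> ideals S"
    and e: "\<forall>n. {I \<in> ideals R. F I \<in> basic S n} = \<Union> (basic R ` B n)"
  shows "continuous_map (ideal_topology R) (ideal_topology S) F"
  unfolding ideal_topology_def
proof (rule continuous_on_generated_topo)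
  have ts: "topspace (topology_generated_by (range (basic R))) = ideals R"
    using topspace_it[of R] unfolding ideal_topology_def .
  fix U assume "U \<in> range (basic S)"
  then obtain n where U: "U = basic S n" by blast
  have "F -` U \<inter> topspace (topology_generated_by (range (basic R))) = {I \<in> ideals R. F I \<in> basic S n}"
    unfolding ts U by auto
  also have "\<dots> = \<Union> (basic R ` B n)" using e by blast
  finally have eq: "F -` U \<inter> topspace (topology_generated_by (range (basic R))) = \<Union> (basic R ` B n)" .
  have "openin (topology_generated_by (range (basic R))) (\<Union> (basic R ` B n))"
    by (rule openin_Union) (auto intro: topology_generated_by_Basis)
  then show "openin (topology_generated_by (range (basic R))) (F -` U \<inter> topspace (topology_generated_by (range (basic R))))"
    unfolding eq .
next
  have ts: "topspace (topology_generated_by (range (basic R))) = ideals R"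
    using topspace_it[of R] unfolding ideal_topology_def .
  have ts2: "\<Union> (range (basic S)) = ideals S"
    using topspace_it[of S] unfolding ideal_topology_def by simp
  show "F ` topspace (topology_generated_by (range (basic R))) \<subseteq> \<Union> (range (basic S))"
    unfolding ts ts2 using m by blast
qed

lemma good_from_ce:
  assumes f: "\<forall>n. n \<in> rel_code R \<longleftrightarrow> (\<exists>y. eval f [n] y)" and tr: "transitive_rel R"
  shows "good R f"
  unfolding good_def
proof (intro conjI allI tr)
  fix a b
  have "R a b \<longleftrightarrow> prod_encode (a, b) \<in> rel_code R" unfolding rel_code_def by auto
  also have "\<dots> \<longleftrightarrow> (\<exists>y. eval f [prod_encode (a, b)] y)" using f by blast
  also have "\<dots> \<longleftrightarrow> (\<exists>t. Ef f t a b)"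
  proof
    assume "\<exists>y. eval f [prod_encode (a, b)] y"
    then obtain y where "eval f [prod_encode (a, b)] y" by blast
    then obtain t where "bev f t [prod_encode (a, b)] = Suc y" using bev_complete by blast
    then have "Ef f t a b" unfolding Ef_def by simp
    then show "\<exists>t. Ef f t a b" by blast
  next
    assume "\<exists>t. Ef f t a b"
    then obtain t where "bev f t [prod_encode (a, b)] \<noteq> 0" unfolding Ef_def by blast
    then obtain y where "bev f t [prod_encode (a, b)] = Suc y" using not0_implies_Suc by blast
    then show "\<exists>y. eval f [prod_encode (a, b)] y" using bev_sound by blast
  qed
  finally show "R a b \<longleftrightarrow> (\<exists>t. Ef f t a b)" .
qed

theorem proposition2:
  fixes R :: "nat \<Rightarrow> nat \<Rightarrow> bool"
  assumes "ce_rel R" and "transitive_rel R"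
  shows "\<exists>S. computable_rel S \<and> strict_partial_order S \<and> computably_homeomorphic R S"
proof -
  obtain f where f: "\<forall>n. n \<in> rel_code R \<longleftrightarrow> (\<exists>y. eval f [n] y)"
    using assms(1) unfolding ce_rel_def ce_set_def by blast
  have g: "good R f" by (rule good_from_ce[OF f assms(2)])
  let ?S = "Srel f"
  have m1: "\<forall>I\<in>ideals R. Phi I \<in> ideals ?S" using Phi_ideal[OF g] unfolding ideals_def by blast
  have m2: "\<forall>J\<in>ideals ?S. Psi J \<in> ideals R" using Psi_ideal[OF g] unfolding ideals_def by blast
  have e1: "\<forall>n. {I \<in> ideals R. Phi I \<in> basic ?S n} = \<Union> (basic R ` B1 R n)"
  proof
    fix n
    show "{I \<in> ideals R. Phi I \<in> basic ?S n} = \<Union> (basic R ` B1 R n)"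
    proof (rule set_eqI)
      fix I
      show "I \<in> {I \<in> ideals R. Phi I \<in> basic ?S n} \<longleftrightarrow> I \<in> \<Union> (basic R ` B1 R n)"
      proof (cases "I \<in> ideals R")
        case True
        then have "is_ideal R I" unfolding ideals_def by simp
        then show ?thesis using Phi_pre[OF g, of I n] m1 True unfolding basic_def B1_def by auto
      next
        case False
        then show ?thesis unfolding basic_def by auto
      qed
    qed
  qed
  have e2: "\<forall>n. {J \<in> ideals ?S. Psi J \<in> basic R n} = \<Union> (basic ?S ` B2 n)"
  proof
    fix n
    show "{J \<in> ideals ?S. Psi J \<in> basic R n} = \<Union> (basic ?S ` B2 n)"
      using m2 unfolding basic_def B2_def Psi_def by auto
  qed
  have hm: "homeomorphic_maps (ideal_topology R) (ideal_topology ?S) Phi Psi"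
    unfolding homeomorphic_maps_def topspace_it
  proof (intro conjI ballI)
    show "continuous_map (ideal_topology R) (ideal_topology ?S) Phi" by (rule cont_from_eq[OF m1 e1])
    show "continuous_map (ideal_topology ?S) (ideal_topology R) Psi" by (rule cont_from_eq[OF m2 e2])
    fix I assume "I \<in> ideals R"
    then show "Psi (Phi I) = I" using Psi_Phi unfolding ideals_def by blast
  next
    fix J assume "J \<in> ideals ?S"
    then show "Phi (Psi J) = J" using Phi_Psi unfolding ideals_def by blast
  qed
  have "computable_map R ?S Phi" unfolding computable_map_def using B1_ce[OF g] e1 by blast
  moreover have "computable_map ?S R Psi" unfolding computable_map_def using B2_ce e2 by blast
  ultimately have "computably_homeomorphic R ?S" unfolding computably_homeomorphic_def using hm by blast
  then show ?thesis using Srel_computable Srel_spo by blast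
qed


end
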